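(* Let $O$ be a finite order with $n$ elements having a questionable representation of finite width $k\ge2$ and finite length $l$. Then the comparability digraph of $O$ (arc $x\to y$ iff $x<y$) has a clique-width expression using at most $k$ labels, whose syntax tree has depth at most $l\,(k(k-1)+\lceil\log_2(k-1)\rceil)+\lceil\log_2 n\rceil+(l-1)(k-1)$.
   Context: For an ordinal $j$, $\mathcal O_j=(O_k)_{k<j}$ is a sequence of orders; a word of length $\ell\le j$ is $(x_k)_{k<\ell}$ with $x_k\in\mathrm{Dom}(O_k)$. The question of words $X,Y$ is $(k,x_k,y_k)$ for the least $k<\min(\mathrm{len}X,\mathrm{len}Y)$ with $x_k\ne y_k$, if it exists. For $i<j$, $\mathrm{Next}(i,j,\mathcal O_j)$ is the partial order on words of length $\ell$, $i\le\ell<j$, with $X<Y$ iff their question exists and $x_k<y_k$ in $O_k$; otherwise incomparable. A questionable representation of an order $O$ is an injective $f$ into some $\mathrm{Next}(i,j,\mathcal O_j)$ with $f(x)<f(y)\iff x<y$ for all $x,y$; its length is $j$ and its width is the supremum of the cardinalities of the $\mathrm{Dom}(O_k)$. Clique-width expressions (vertex creation with a label, disjoint union, relabelling, and adding all arcs from one label class to another) are the standard notion for directed graphs. *)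

theory Defs
  imports Complex_Main
begin

definition strict_order_on :: "'a set \<Rightarrow> ('a \<Rightarrow> 'a \<Rightarrow> bool) \<Rightarrow> bool" where
  "strict_order_on A r \<longleftrightarrow>
     (\<forall>x\<in>A. \<not> r x x) \<and> (\<forall>x\<in>A. \<forall>y\<in>A. \<forall>z\<in>A. r x y \<longrightarrow> r y z \<longrightarrow> r x z)"

definition is_word :: "(nat \<Rightarrow> 'b set) \<Rightarrow> 'b list \<Rightarrow> bool" where
  "is_word D X \<longleftrightarrow> (\<forall>k<length X. X ! k \<in> D k)"

definition next_dom :: "nat \<Rightarrow> nat \<Rightarrow> (nat \<Rightarrow> 'b set) \<Rightarrow> 'b list set" where
  "next_dom i j D = {X. is_word D X \<and> i \<le> length X \<and> length X < j}"

text \<open>The question of X, Y is at the least index k < min lengths with X!k ~= Y!k.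
  X < Y in Next iff the question exists and X!k < Y!k in O_k.\<close>
definition next_less :: "(nat \<Rightarrow> 'b \<Rightarrow> 'b \<Rightarrow> bool) \<Rightarrow> 'b list \<Rightarrow> 'b list \<Rightarrow> bool" where
  "next_less R X Y \<longleftrightarrow>
     (\<exists>k<min (length X) (length Y). (\<forall>m<k. X ! m = Y ! m) \<and> X ! k \<noteq> Y ! k
        \<and> R k (X ! k) (Y ! k))"

definition finite_width :: "nat \<Rightarrow> (nat \<Rightarrow> 'b set) \<Rightarrow> nat \<Rightarrow> bool" where
  "finite_width j D w \<longleftrightarrow>
     (\<forall>k<j. finite (D k) \<and> card (D k) \<le> w) \<and> (\<exists>k<j. card (D k) = w)"

definition has_qrep :: "'a set \<Rightarrow> ('a \<Rightarrow> 'a \<Rightarrow> bool) \<Rightarrow> 'b itself \<Rightarrow> nat \<Rightarrow> nat \<Rightarrow> bool" where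
  "has_qrep V lt _ w j \<longleftrightarrow>
     (\<exists>i (D :: nat \<Rightarrow> 'b set) R f.
        i < j \<and> (\<forall>k<j. strict_order_on (D k) (R k)) \<and> finite_width j D w \<and>
        inj_on f V \<and> f ` V \<subseteq> next_dom i j D \<and>
        (\<forall>x\<in>V. \<forall>y\<in>V. next_less R (f x) (f y) \<longleftrightarrow> lt x y))"

datatype 'v cwexp =
    CVertex 'v nat
  | CUnion "'v cwexp" "'v cwexp"
  | CRelabel nat nat "'v cwexp"
  | CArcs nat nat "'v cwexp"

fun cw_verts :: "'v cwexp \<Rightarrow> 'v set" where
  "cw_verts (CVertex v i) = {v}"
| "cw_verts (CUnion e1 e2) = cw_verts e1 \<union> cw_verts e2"
| "cw_verts (CRelabel i j e) = cw_verts e"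
| "cw_verts (CArcs i j e) = cw_verts e"

fun cw_lab :: "'v cwexp \<Rightarrow> 'v \<Rightarrow> nat" where
  "cw_lab (CVertex v i) = (\<lambda>u. i)"
| "cw_lab (CUnion e1 e2) = (\<lambda>u. if u \<in> cw_verts e1 then cw_lab e1 u else cw_lab e2 u)"
| "cw_lab (CRelabel i j e) = (\<lambda>u. if cw_lab e u = i then j else cw_lab e u)"
| "cw_lab (CArcs i j e) = cw_lab e"

fun cw_arcs :: "'v cwexp \<Rightarrow> ('v \<times> 'v) set" where
  "cw_arcs (CVertex v i) = {}"
| "cw_arcs (CUnion e1 e2) = cw_arcs e1 \<union> cw_arcs e2"
| "cw_arcs (CRelabel i j e) = cw_arcs e"
| "cw_arcs (CArcs i j e) = cw_arcs e \<union>
     {(u, w). u \<in> cw_verts e \<and> w \<in> cw_verts e \<and> cw_lab e u = i \<and> cw_lab e w = j}"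

fun cw_wf :: "'v cwexp \<Rightarrow> bool" where
  "cw_wf (CVertex v i) = True"
| "cw_wf (CUnion e1 e2) = (cw_wf e1 \<and> cw_wf e2 \<and> cw_verts e1 \<inter> cw_verts e2 = {})"
| "cw_wf (CRelabel i j e) = cw_wf e"
| "cw_wf (CArcs i j e) = (i \<noteq> j \<and> cw_wf e)"

fun cw_labels :: "'v cwexp \<Rightarrow> nat set" where
  "cw_labels (CVertex v i) = {i}"
| "cw_labels (CUnion e1 e2) = cw_labels e1 \<union> cw_labels e2"
| "cw_labels (CRelabel i j e) = {i, j} \<union> cw_labels e"
| "cw_labels (CArcs i j e) = {i, j} \<union> cw_labels e"

fun cw_depth :: "'v cwexp \<Rightarrow> nat" where
  "cw_depth (CVertex v i) = 0"
| "cw_depth (CUnion e1 e2) = Suc (max (cw_depth e1) (cw_depth e2))"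
| "cw_depth (CRelabel i j e) = Suc (cw_depth e)"
| "cw_depth (CArcs i j e) = Suc (cw_depth e)"

end

theory Submission
  imports Defs
begin



definition clog :: "nat \<Rightarrow> nat" where "clog m = nat \<lceil>log 2 (real m)\<rceil>"


lemma clog_le: assumes "1 \<le> m" shows "m \<le> 2 ^ clog m"
proof -
  have c: "real_of_int \<lceil>log 2 (real m)\<rceil> = real (clog m)"
    using assms by (simp add: clog_def)
  have "real m = 2 powr (log 2 (real m))" using assms by simp
  also have "\<dots> \<le> 2 powr (real_of_int \<lceil>log 2 (real m)\<rceil>)" by (intro powr_mono) auto
  also have "\<dots> = 2 ^ clog m" unfolding c by (simp add: powr_realpow)
  finally have "real m \<le> real (2 ^ clog m)" by simp
  thus ?thesis by (simp only: of_nat_le_iff)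
qed

lemma clog_up: assumes "1 \<le> m" shows "2 ^ clog m \<le> 2 * m"
proof -
  have c: "real_of_int \<lceil>log 2 (real m)\<rceil> = real (clog m)"
    using assms by (simp add: clog_def)
  have "(2::real) ^ clog m = 2 powr (real_of_int \<lceil>log 2 (real m)\<rceil>)" unfolding c by (simp add: powr_realpow)
  also have "\<dots> \<le> 2 powr (log 2 (real m) + 1)" by (intro powr_mono) auto
  also have "\<dots> = 2 * m" using assms by (simp add: powr_add)
  finally have "real (2 ^ clog m) \<le> real (2 * m)" by simp
  thus ?thesis by (simp only: of_nat_le_iff)
qed

lemma clog_mono: "1 \<le> m \<Longrightarrow> m \<le> m' \<Longrightarrow> clog m \<le> clog m'"
  unfolding clog_def by (intro nat_mono ceiling_mono) auto

lemma nl_diff: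
  assumes "take d X = take d Y" "d < length X" "d < length Y" "X!d \<noteq> Y!d"
  shows "next_less R X Y \<longleftrightarrow> R d (X!d) (Y!d)"
proof
  assume "next_less R X Y"
  then obtain j where j: "j < min (length X) (length Y)" "\<forall>m<j. X ! m = Y ! m" "X ! j \<noteq> Y ! j" "R j (X ! j) (Y ! j)"
    unfolding next_less_def by blast
  have "j = d"
  proof (rule ccontr)
    assume "j \<noteq> d"
    then consider "j < d" | "d < j" by linarith
    then show False
    proof cases
      case 1 then show False using j(3) assms(1) by (metis nth_take)
    next
      case 2 then show False using j(2) assms(4) by blast
    qed
  qed
  then show "R d (X!d) (Y!d)" using j by simp
next
  assume "R d (X!d) (Y!d)"
  moreover have "\<forall>m<d. X ! m = Y ! m" using assms(1) by (metis nth_take)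
  ultimately show "next_less R X Y" unfolding next_less_def using assms by auto
qed

lemma nl_prefix: "take (length X) Y = X \<Longrightarrow> \<not> next_less R X Y"
  unfolding next_less_def by (metis min_less_iff_conj nth_take)

lemma nl_irrefl: "\<not> next_less R X X"
  unfolding next_less_def by auto

lemma asym_card:
  assumes "finite A" "\<forall>x\<in>A. \<not> r x x" "\<forall>x\<in>A. \<forall>y\<in>A. \<forall>z\<in>A. r x y \<longrightarrow> r y z \<longrightarrow> r x z"
  shows "2 * card {(a,b). a \<in> A \<and> b \<in> A \<and> r a b} \<le> card A * (card A - 1)"
proof -
  define Q where "Q = {(a,b). a \<in> A \<and> b \<in> A \<and> r a b}"
  define Off where "Off = A \<times> A - (\<lambda>a. (a,a)) ` A"
  have fQ: "finite Q" by (rule finite_subset[of _ "A \<times> A"]) (auto simp: Q_def assms(1))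
  have sw: "prod.swap ` Q = {(a,b). a \<in> A \<and> b \<in> A \<and> r b a}"
    unfolding Q_def by (auto simp: image_iff)
  have nb: "\<And>a b. a \<in> A \<Longrightarrow> b \<in> A \<Longrightarrow> r a b \<Longrightarrow> r b a \<Longrightarrow> False"
    using assms(2,3) by metis
  have dis: "Q \<inter> prod.swap ` Q = {}" unfolding sw unfolding Q_def using nb by blast
  have sub: "Q \<union> prod.swap ` Q \<subseteq> Off" unfolding sw unfolding Q_def Off_def using assms(2) by auto
  have cs: "card (prod.swap ` Q) = card Q" by (rule card_image) (auto simp: inj_on_def)
  have fS: "finite (prod.swap ` Q)" using fQ by simp
  have u: "card (Q \<union> prod.swap ` Q) = card Q + card (prod.swap ` Q)" using card_Un_disjoint[OF fQ fS dis] .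
  have fOff: "finite Off" unfolding Off_def using assms(1) by simp
  have m: "card (Q \<union> prod.swap ` Q) \<le> card Off" using card_mono[OF fOff sub] .
  have ci: "card ((\<lambda>a. (a,a)) ` A) = card A" by (rule card_image) (simp add: inj_on_def)
  have "card Off = card (A \<times> A) - card ((\<lambda>a. (a,a)) ` A)" unfolding Off_def
    by (rule card_Diff_subset) (use assms(1) in auto)
  then have co: "card Off = card A * card A - card A" using ci by (simp add: card_cartesian_product)
  have "2 * card Q \<le> card A * card A - card A" using u m co cs by linarith
  moreover have "card A * (card A - 1) = card A * card A - card A" using diff_mult_distrib2[of "card A" "card A" 1] by simp
  ultimately show ?thesis unfolding Q_def by linarith
qed



fun addarcs :: "(nat \<times> nat) list \<Rightarrow> 'v cwexp \<Rightarrow> 'v cwexp" where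
  "addarcs [] e = e"
| "addarcs ((i,j)#qs) e = CArcs i j (addarcs qs e)"

lemma af_verts[simp]: "cw_verts (addarcs qs e) = cw_verts e" by (induction qs e rule: addarcs.induct) simp_all
lemma af_lab[simp]: "cw_lab (addarcs qs e) = cw_lab e" by (induction qs e rule: addarcs.induct) simp_all
lemma af_arcs: "cw_arcs (addarcs qs e) = cw_arcs e \<union>
      {(u,w). u \<in> cw_verts e \<and> w \<in> cw_verts e \<and> (cw_lab e u, cw_lab e w) \<in> set qs}"
  by (induction qs e rule: addarcs.induct) auto
lemma af_wf: "cw_wf (addarcs qs e) = (cw_wf e \<and> (\<forall>(i,j)\<in>set qs. i \<noteq> j))"
  by (induction qs e rule: addarcs.induct) auto
lemma af_labels: "cw_labels (addarcs qs e) = cw_labels e \<union> (\<Union>(i,j)\<in>set qs. {i,j})"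
  by (induction qs e rule: addarcs.induct) auto
lemma af_depth: "cw_depth (addarcs qs e) = cw_depth e + length qs"
  by (induction qs e rule: addarcs.induct) simp_all

fun relabs :: "nat list \<Rightarrow> nat \<Rightarrow> 'v cwexp \<Rightarrow> 'v cwexp" where
  "relabs [] t e = e"
| "relabs (j#js) t e = CRelabel j t (relabs js t e)"

lemma rf_verts[simp]: "cw_verts (relabs js t e) = cw_verts e" by (induction js) simp_all
lemma rf_arcs[simp]: "cw_arcs (relabs js t e) = cw_arcs e" by (induction js) simp_all
lemma rf_wf[simp]: "cw_wf (relabs js t e) = cw_wf e" by (induction js) simp_all
lemma rf_depth: "cw_depth (relabs js t e) = cw_depth e + length js" by (induction js) simp_all
lemma rf_labels: "cw_labels (relabs js t e) \<subseteq> cw_labels e \<union> set js \<union> {t}" by (induction js) auto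
lemma rf_lab: "t \<notin> set js \<Longrightarrow> cw_lab (relabs js t e) v = (if cw_lab e v \<in> set js then t else cw_lab e v)"
  by (induction js) auto




lemma pow_merge:
  fixes X :: nat
  assumes "X + 2^d1 + 2^d2 \<le> 2^D" "d1 \<le> d2" "2^d2 dvd X"
  shows "X + 2^(Suc d2) \<le> 2^D"
proof (cases "d1 = d2")
  case True then show ?thesis using assms by simp
next
  case False
  have "(2::nat)^d2 \<le> 2^D" using assms(1) by linarith
  then have "d2 \<le> D" by simp
  then have dD: "(2::nat)^d2 dvd 2^D" by (simp add: le_imp_power_dvd)
  obtain c where c: "X = 2^d2 * c" using assms(3) by (auto elim: dvdE)
  define q where "q = c + 1"
  have q: "X + 2^d2 = q * 2^d2" unfolding q_def c by simp
  obtain r where r0: "2^D = (2::nat)^d2 * r" using dD by (auto elim: dvdE)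
  have r: "2^D = r * (2::nat)^d2" using r0 by simp
  have "(1::nat) \<le> 2^d1" by simp
  then have "q * 2^d2 < r * 2^d2" using q r assms(1) by linarith
  then have "q < r" by simp
  then have "(q+1) * 2^d2 \<le> r * (2::nat)^d2" by (intro mult_right_mono) auto
  then show ?thesis using q r by (simp add: algebra_simps)
qed

lemma kraft:
  "finite I \<Longrightarrow> I \<noteq> {} \<Longrightarrow> (\<forall>e\<in>I. cw_wf e \<and> cw_verts e \<noteq> {}) \<Longrightarrow>
   (\<forall>e1\<in>I. \<forall>e2\<in>I. e1 \<noteq> e2 \<longrightarrow> cw_verts e1 \<inter> cw_verts e2 = {}) \<Longrightarrow>
   (\<Sum>e\<in>I. (2::nat) ^ cw_depth e) \<le> 2 ^ D \<Longrightarrow>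
   \<exists>u. cw_wf u \<and> cw_verts u = \<Union>(cw_verts ` I) \<and> cw_arcs u = \<Union>(cw_arcs ` I) \<and>
       cw_labels u = \<Union>(cw_labels ` I) \<and> (\<forall>e\<in>I. \<forall>v\<in>cw_verts e. cw_lab u v = cw_lab e v) \<and>
       cw_depth u \<le> D"
proof (induction "card I" arbitrary: I rule: less_induct)
  case less
  show ?case
  proof (cases "card I = 1")
    case True
    then obtain e where I: "I = {e}" by (rule card_1_singletonE)
    have "2^cw_depth e \<le> (2::nat)^D" using less.prems I by simp
    then have "cw_depth e \<le> D" by simp
    then show ?thesis using I less.prems by (intro exI[of _ e]) auto
  next
    case False
    have cI: "card I \<ge> 2" using False less.prems(1,2) card_0_eq by fastforce
    obtain e1 where e1: "e1 \<in> I" "\<forall>e\<in>I. cw_depth e1 \<le> cw_depth e"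
      using ex_has_least_nat[of "\<lambda>e. e \<in> I" _ cw_depth] less.prems(2) by blast
    define I1 where "I1 = I - {e1}"
    have "card I1 = card I - 1" unfolding I1_def using e1(1) less.prems(1) by simp
    then have I1ne: "I1 \<noteq> {}" using cI by auto
    obtain e2 where e2: "e2 \<in> I1" "\<forall>e\<in>I1. cw_depth e2 \<le> cw_depth e"
      using ex_has_least_nat[of "\<lambda>e. e \<in> I1" _ cw_depth] I1ne by blast
    define rest where "rest = I1 - {e2}"
    define e' where "e' = CUnion e1 e2"
    have e2I: "e2 \<in> I" "e2 \<noteq> e1" using e2(1) unfolding I1_def by auto
    have Ieq: "I = insert e1 (insert e2 rest)" using e1(1) e2I unfolding rest_def I1_def by auto
    have restI: "rest \<subseteq> I" "e1 \<notin> rest" "e2 \<notin> rest" unfolding rest_def I1_def by auto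
    have fr: "finite rest" using less.prems(1) restI(1) finite_subset by blast
    have d12: "cw_verts e1 \<inter> cw_verts e2 = {}" using less.prems(4) e1(1) e2I by blast
    have dr: "\<forall>r\<in>rest. cw_verts e' \<inter> cw_verts r = {}"
    proof
      fix r assume "r \<in> rest"
      then have r: "r \<in> I" "r \<noteq> e1" "r \<noteq> e2" using restI by auto
      have "cw_verts r \<inter> cw_verts e1 = {}" using less.prems(4) r(1,2) e1(1) by blast
      moreover have "cw_verts r \<inter> cw_verts e2 = {}" using less.prems(4) r(1,3) e2I(1) by blast
      ultimately show "cw_verts e' \<inter> cw_verts r = {}" unfolding e'_def by auto
    qed
    have e'nr: "e' \<notin> rest"
    proof
      assume "e' \<in> rest"
      then have "cw_verts e' \<inter> cw_verts e' = {}" using dr by blast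
      moreover have "cw_verts e1 \<noteq> {}" using less.prems(3) e1(1) by blast
      ultimately show False unfolding e'_def by auto
    qed
    define I' where "I' = insert e' rest"
    have cIeq: "card I = Suc (Suc (card rest))" using Ieq restI fr e2I by simp
    have cI': "card I' = Suc (card rest)" unfolding I'_def using e'nr fr by simp
    have sI: "(\<Sum>e\<in>I. (2::nat) ^ cw_depth e) = (\<Sum>e\<in>rest. 2 ^ cw_depth e) + 2^cw_depth e1 + 2^cw_depth e2"
      using Ieq restI fr e2I by simp
    have sI': "(\<Sum>e\<in>I'. (2::nat) ^ cw_depth e) = (\<Sum>e\<in>rest. 2 ^ cw_depth e) + 2^Suc (cw_depth e2)"
      unfolding I'_def using e'nr fr by (simp add: e'_def max_def e1(2) e2I)
    have dvd: "(2::nat)^cw_depth e2 dvd (\<Sum>e\<in>rest. 2 ^ cw_depth e)"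
    proof (rule dvd_sum)
      fix e assume "e \<in> rest"
      then have "cw_depth e2 \<le> cw_depth e" using e2(2) unfolding rest_def by auto
      then show "(2::nat)^cw_depth e2 dvd 2^cw_depth e" by (simp add: le_imp_power_dvd)
    qed
    have "(\<Sum>e\<in>I'. (2::nat) ^ cw_depth e) \<le> 2^D"
      unfolding sI' by (rule pow_merge[OF _ _ dvd]) (use less.prems(5) sI e1(2) e2I in auto)
    moreover have "finite I'" "I' \<noteq> {}" unfolding I'_def using fr by auto
    moreover have "\<forall>e\<in>I'. cw_wf e \<and> cw_verts e \<noteq> {}"
      unfolding I'_def e'_def using less.prems(3) e1(1) e2I restI d12 by auto
    moreover have "\<forall>a\<in>I'. \<forall>b\<in>I'. a \<noteq> b \<longrightarrow> cw_verts a \<inter> cw_verts b = {}"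
      unfolding I'_def using dr less.prems(4) restI by blast
    ultimately obtain u where u: "cw_wf u" "cw_verts u = \<Union>(cw_verts ` I')" "cw_arcs u = \<Union>(cw_arcs ` I')"
       "cw_labels u = \<Union>(cw_labels ` I')" "\<forall>e\<in>I'. \<forall>v\<in>cw_verts e. cw_lab u v = cw_lab e v" "cw_depth u \<le> D"
      using less.hyps[of I'] cI' cIeq by auto
    show ?thesis
    proof (intro exI[of _ u] conjI)
      show "cw_wf u" "cw_depth u \<le> D" using u by auto
      show "cw_verts u = \<Union>(cw_verts ` I)" using u(2) unfolding I'_def e'_def Ieq by auto
      show "cw_arcs u = \<Union>(cw_arcs ` I)" using u(3) unfolding I'_def e'_def Ieq by auto
      show "cw_labels u = \<Union>(cw_labels ` I)" using u(4) unfolding I'_def e'_def Ieq by auto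
      show "\<forall>e\<in>I. \<forall>v\<in>cw_verts e. cw_lab u v = cw_lab e v"
      proof (intro ballI)
        fix e v assume eI: "e \<in> I" and v: "v \<in> cw_verts e"
        show "cw_lab u v = cw_lab e v"
        proof (cases "e \<in> rest")
          case True then show ?thesis using u(5) v unfolding I'_def by auto
        next
          case False
          then have "e = e1 \<or> e = e2" using eI Ieq by auto
          moreover have "cw_lab u v = cw_lab e' v" using u(5) v \<open>e = e1 \<or> e = e2\<close> unfolding I'_def e'_def by auto
          ultimately show ?thesis unfolding e'_def using v d12 by auto
        qed
      qed
    qed
  qed
qed





lemma nl_prefix2: "take (length Y) X = Y \<Longrightarrow> \<not> next_less R X Y"
  unfolding next_less_def by (metis min_less_iff_conj nth_take)

locale qr =
  fixes V :: "'a set" and lt :: "'a \<Rightarrow> 'a \<Rightarrow> bool" and k l :: nat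
    and D :: "nat \<Rightarrow> 'b set" and R :: "nat \<Rightarrow> 'b \<Rightarrow> 'b \<Rightarrow> bool" and f :: "'a \<Rightarrow> 'b list"
  assumes finV: "finite V"
    and so: "\<forall>j<l. strict_order_on (D j) (R j)"
    and fw: "\<forall>j<l. finite (D j) \<and> card (D j) \<le> k"
    and injf: "inj_on f V"
    and wrd: "\<forall>x\<in>V. is_word D (f x) \<and> length (f x) < l"
    and rel: "\<forall>x\<in>V. \<forall>y\<in>V. next_less R (f x) (f y) \<longleftrightarrow> lt x y"
    and k2: "k \<ge> 2"
begin

definition ext :: "'b list \<Rightarrow> 'a set" where
  "ext p = {x\<in>V. length p < length (f x) \<and> take (length p) (f x) = p}"

definition PP :: nat where "PP = k*(k-1) + (k-1)"

definition good :: "'b list \<Rightarrow> nat \<Rightarrow> nat \<Rightarrow> 'a cwexp \<Rightarrow> bool" where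
 "good p h t e \<longleftrightarrow> cw_wf e \<and> cw_verts e = ext p \<and>
    cw_arcs e = {(x,y). x \<in> ext p \<and> y \<in> ext p \<and> lt x y}
    \<and> (\<forall>v\<in>ext p. cw_lab e v = t) \<and> cw_labels e \<subseteq> {..<k} \<and> cw_depth e \<le> h*PP + clog (card (ext p))"

lemma ext_sub: "ext p \<subseteq> V" unfolding ext_def by auto
lemma ext_fin: "finite (ext p)" using finV ext_sub finite_subset by blast

lemma level: "l - 1 \<le> length p + h \<Longrightarrow> t < k \<Longrightarrow> ext p \<noteq> {} \<Longrightarrow> \<exists>e. good p h t e"
proof (induction h arbitrary: p t)
  case 0
  then obtain x where "x\<in>V" "length p < length (f x)" unfolding ext_def by auto
  then show ?case using wrd 0 by fastforce
next
  case (Suc h)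
  define d where "d = length p"
  obtain x0 where x0: "x0 \<in> ext p" using Suc.prems by auto
  have dl: "d < l" using x0 wrd unfolding ext_def d_def by fastforce
  have finD: "finite (D d)" and cD: "card (D d) \<le> k" using fw dl by auto
  obtain lab where lab: "lab ` D d \<subseteq> {..<k}" "inj_on lab (D d)"
    using card_le_inj[of "D d" "{..<k}"] finD cD by auto
  have soD: "strict_order_on (D d) (R d)" using so dl by auto
  define Sa where "Sa a = ext (p @ [a])" for a
  define A1 where "A1 = {a \<in> D d. Sa a \<noteq> {}}"
  have "\<forall>a\<in>A1. \<exists>e. good (p@[a]) h (lab a) e"
  proof
    fix a assume a: "a \<in> A1"
    show "\<exists>e. good (p@[a]) h (lab a) e"
      by (rule Suc.IH) (use Suc.prems(1) a lab(1) in \<open>auto simp: A1_def Sa_def\<close>)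
  qed
  then obtain G where G: "\<forall>a\<in>A1. good (p@[a]) h (lab a) (G a)" by metis
  define N where "N = {x \<in> ext p. length (f x) = Suc d}"
  define I where "I = G ` A1 \<union> (\<lambda>x. CVertex x (lab (f x ! d))) ` N"
  have F1: "f x ! d \<in> D d" if "x \<in> ext p" for x
    using that wrd unfolding ext_def is_word_def d_def by auto
  have Sa_eq: "Sa a = {x \<in> ext p. Suc d < length (f x) \<and> f x ! d = a}" for a
  proof -
    have "take (Suc d) X = p @ [a] \<longleftrightarrow> take d X = p \<and> X ! d = a" if "d < length X" for X :: "'b list"
      using that by (auto simp: take_Suc_conv_app_nth d_def)
    then show ?thesis unfolding Sa_def ext_def d_def by auto
  qed
  have F2: "x \<in> N \<or> (f x ! d \<in> A1 \<and> x \<in> Sa (f x ! d))" if "x \<in> ext p" for x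
  proof (cases "length (f x) = Suc d")
    case True then show ?thesis using that unfolding N_def by auto
  next
    case False
    then have "Suc d < length (f x)" using that unfolding ext_def d_def by auto
    then have "x \<in> Sa (f x ! d)" using that unfolding Sa_eq by auto
    then show ?thesis using F1[OF that] unfolding A1_def by auto
  qed
  have F4: "f x = p @ [f x ! d]" if "x \<in> N" for x
  proof -
    have l: "length (f x) = Suc d" using that unfolding N_def by auto
    have "f x = take (Suc d) (f x)" using l by simp
    also have "\<dots> = take d (f x) @ [f x ! d]" by (rule take_Suc_conv_app_nth) (use l in simp)
    also have "take d (f x) = p" using that unfolding N_def ext_def d_def by auto
    finally show ?thesis .
  qed
  have SaP: "Sa a \<subseteq> ext p" for a unfolding Sa_eq by auto
  have finSa: "finite (Sa a)" for a unfolding Sa_def by (rule ext_fin)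
  have GA: "cw_wf (G a) \<and> cw_verts (G a) = Sa a \<and> cw_arcs (G a) = {(x,y). x \<in> Sa a \<and> y \<in> Sa a \<and> lt x y}
      \<and> (\<forall>v\<in>Sa a. cw_lab (G a) v = lab a) \<and> cw_labels (G a) \<subseteq> {..<k}
      \<and> cw_depth (G a) \<le> h*PP + clog (card (Sa a))" if "a \<in> A1" for a
    using G that unfolding good_def Sa_def by auto
  have finI: "finite I" unfolding I_def N_def A1_def using finD ext_fin by auto
  have Ine: "I \<noteq> {}" using F2[OF x0] unfolding I_def by auto
  have Iwf: "\<forall>e\<in>I. cw_wf e \<and> cw_verts e \<noteq> {}"
  proof
    fix e assume "e \<in> I"
    then consider a where "a \<in> A1" "e = G a" | x where "x \<in> N" "e = CVertex x (lab (f x ! d))"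
      unfolding I_def by auto
    then show "cw_wf e \<and> cw_verts e \<noteq> {}"
    proof cases
      case 1 then show ?thesis using GA[OF 1(1)] unfolding A1_def by auto
    qed auto
  qed
  have Idis: "\<forall>e1\<in>I. \<forall>e2\<in>I. e1 \<noteq> e2 \<longrightarrow> cw_verts e1 \<inter> cw_verts e2 = {}"
  proof (intro ballI impI)
    fix e1 e2 assume e1: "e1 \<in> I" and e2: "e2 \<in> I" and ne: "e1 \<noteq> e2"
    have SaN: "x \<notin> Sa a" if "x \<in> N" for x a using that unfolding Sa_eq N_def by auto
    have Sab: "Sa a \<inter> Sa b = {}" if "a \<noteq> b" for a b using that unfolding Sa_eq by auto
    have GG: "cw_verts (G a) \<inter> cw_verts (G b) = {}" if "a \<in> A1" "b \<in> A1" "G a \<noteq> G b" for a b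
    proof (cases "a = b")
      case True then show ?thesis using that by simp
    next
      case False then show ?thesis using GA[OF that(1)] GA[OF that(2)] Sab by auto
    qed
    show "cw_verts e1 \<inter> cw_verts e2 = {}"
      using e1 e2 ne unfolding I_def
      apply (elim UnE imageE)
      using GA GG SaN by auto
  qed
  have Ilab: "\<forall>e\<in>I. \<forall>v\<in>cw_verts e. cw_lab e v = lab (f v ! d)"
    unfolding I_def using GA unfolding Sa_eq by auto
  have labk: "lab (f x ! d) < k" if "x \<in> ext p" for x using lab(1) F1[OF that] by auto
  have Ilabels: "\<Union>(cw_labels ` I) \<subseteq> {..<k}"
    unfolding I_def using GA labk unfolding N_def by auto
  have Iverts: "\<Union>(cw_verts ` I) = ext p"
  proof
    have "\<forall>e\<in>I. cw_verts e \<subseteq> ext p"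
    proof
      fix e assume "e \<in> I"
      then consider a where "a \<in> A1" "e = G a" | x where "x \<in> N" "e = CVertex x (lab (f x ! d))"
        unfolding I_def by auto
      then show "cw_verts e \<subseteq> ext p"
      proof cases
        case 1 then show ?thesis using GA[OF 1(1)] SaP by auto
      next
        case 2 then show ?thesis unfolding N_def by auto
      qed
    qed
    then show "\<Union>(cw_verts ` I) \<subseteq> ext p" by blast
    show "ext p \<subseteq> \<Union>(cw_verts ` I)"
    proof
      fix x assume "x \<in> ext p"
      from F2[OF this] show "x \<in> \<Union>(cw_verts ` I)"
      proof
        assume xN: "x \<in> N"
        then have "CVertex x (lab (f x ! d)) \<in> I" unfolding I_def by blast
        then show ?thesis by (rule UN_I) simp
      next
        assume a: "f x ! d \<in> A1 \<and> x \<in> Sa (f x ! d)"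
        then have "G (f x ! d) \<in> I" unfolding I_def by blast
        then show ?thesis by (rule UN_I) (use GA a in simp)
      qed
    qed
  qed
  have Iarcs: "\<Union>(cw_arcs ` I) = (\<Union>a\<in>A1. {(x,y). x \<in> Sa a \<and> y \<in> Sa a \<and> lt x y})"
  proof -
    have "\<Union>(cw_arcs ` I) = (\<Union>a\<in>A1. cw_arcs (G a))" unfolding I_def by auto
    also have "\<dots> = (\<Union>a\<in>A1. {(x,y). x \<in> Sa a \<and> y \<in> Sa a \<and> lt x y})"
      by (intro SUP_cong refl) (use GA in blast)
    finally show ?thesis .
  qed
  define M where "M = card (ext p)"
  have M1: "1 \<le> M" unfolding M_def using ext_fin[of p] Suc.prems(3) by (simp add: Suc_le_eq card_gt_0_iff)
  have each: "(2::nat) ^ cw_depth e \<le> 2^(h*PP) * (2 * card (cw_verts e))" if eI: "e \<in> I" for e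
  proof -
    from eI consider a where "a \<in> A1" "e = G a" | x where "x \<in> N" "e = CVertex x (lab (f x ! d))"
      unfolding I_def by auto
    then show ?thesis
    proof cases
      case 1
      have c1: "1 \<le> card (Sa a)" using 1 finSa unfolding A1_def by (simp add: Suc_le_eq card_gt_0_iff)
      have "(2::nat) ^ cw_depth e \<le> 2 ^ (h*PP + clog (card (Sa a)))" using GA[OF 1(1)] 1(2) by (intro power_increasing) auto
      also have "\<dots> = 2^(h*PP) * 2 ^ clog (card (Sa a))" by (simp add: power_add)
      also have "\<dots> \<le> 2^(h*PP) * (2 * card (Sa a))" using clog_up[OF c1] by simp
      finally show ?thesis using GA[OF 1(1)] 1(2) by simp
    next
      case 2 then show ?thesis by simp
    qed
  qed
  have "(\<Sum>e\<in>I. (2::nat) ^ cw_depth e) \<le> (\<Sum>e\<in>I. 2^(h*PP) * (2 * card (cw_verts e)))"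
    by (rule sum_mono) (rule each)
  also have "\<dots> = 2^(h*PP) * (2 * (\<Sum>e\<in>I. card (cw_verts e)))" by (simp add: sum_distrib_left)
  also have "(\<Sum>e\<in>I. card (cw_verts e)) = M"
    unfolding M_def Iverts[symmetric]
    by (rule card_UN_disjoint[symmetric]) (use finI Idis Iverts ext_fin in \<open>auto intro: finite_subset\<close>)
  also have "2^(h*PP) * (2 * M) \<le> 2^(h*PP) * (2 * 2 ^ clog M)" using clog_le[OF M1] by simp
  also have "\<dots> = 2 ^ (h*PP + 1 + clog M)" by (simp add: power_add)
  finally have sumb: "(\<Sum>e\<in>I. (2::nat) ^ cw_depth e) \<le> 2 ^ (h*PP + 1 + clog M)" .
  obtain U where U: "cw_wf U" "cw_verts U = ext p" "cw_arcs U = \<Union>(cw_arcs ` I)"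
     "cw_labels U = \<Union>(cw_labels ` I)" "\<forall>e\<in>I. \<forall>v\<in>cw_verts e. cw_lab U v = cw_lab e v"
     "cw_depth U \<le> h*PP + 1 + clog M"
    using kraft[OF finI Ine Iwf Idis sumb] Iverts by auto
  have Ulab: "cw_lab U v = lab (f v ! d)" if v: "v \<in> ext p" for v
  proof -
    obtain e where e: "e \<in> I" "v \<in> cw_verts e" using v Iverts by blast
    then have "cw_lab U v = cw_lab e v" using U(5) by blast
    also have "\<dots> = lab (f v ! d)" using Ilab e by blast
    finally show ?thesis .
  qed
  define Q where "Q = {(a,b). a \<in> D d \<and> b \<in> D d \<and> R d a b}"
  have finQ: "finite Q" by (rule finite_subset[of _ "D d \<times> D d"]) (auto simp: Q_def finD)
  obtain ps where ps: "set ps = Q" "distinct ps" using finite_distinct_list[OF finQ] by blast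
  define qs where "qs = map (\<lambda>(a,b). (lab a, lab b)) ps"
  define js where "js = filter (\<lambda>j. j \<noteq> t) [0..<k]"
  define e where "e = relabs js t (addarcs qs U)"
  have irr: "\<not> R d a a" if "a \<in> D d" for a using soD that unfolding strict_order_on_def by auto
  have qsne0: "i \<noteq> j" if ij: "(i,j) \<in> set qs" for i j
  proof
    assume "i = j"
    obtain a b where ab: "(a,b) \<in> Q" "i = lab a" "j = lab b" using ij unfolding qs_def ps(1)[symmetric] by auto
    then have D: "a \<in> D d" "b \<in> D d" "R d a b" unfolding Q_def by auto
    have "lab a = lab b" using ab \<open>i = j\<close> by simp
    then have "a = b" using inj_onD[OF lab(2)] D by blast
    then show False using irr D by blast
  qed
  have qsne: "\<forall>(i,j)\<in>set qs. i \<noteq> j" using qsne0 by auto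
  have qsiff: "(lab a, lab b) \<in> set qs \<longleftrightarrow> R d a b" if ab: "a \<in> D d" "b \<in> D d" for a b
  proof
    assume "(lab a, lab b) \<in> set qs"
    then obtain a' b' where a'b': "(a',b') \<in> Q" "lab a' = lab a" "lab b' = lab b" unfolding qs_def ps(1)[symmetric] by auto
    then have D': "a' \<in> D d" "b' \<in> D d" "R d a' b'" unfolding Q_def by auto
    have "a' = a" using inj_onD[OF lab(2) a'b'(2) D'(1) ab(1)] .
    moreover have "b' = b" using inj_onD[OF lab(2) a'b'(3) D'(2) ab(2)] .
    ultimately show "R d a b" using D' by simp
  next
    assume "R d a b"
    then have "(a,b) \<in> set ps" using ps(1) ab unfolding Q_def by auto
    then show "(lab a, lab b) \<in> set qs" unfolding qs_def set_map by (rule rev_image_eqI) simp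
  qed
  have tjs: "t \<notin> set js" unfolding js_def by auto
  have arcs2: "cw_arcs (addarcs qs U) = \<Union>(cw_arcs ` I) \<union>
      {(u,w). u \<in> ext p \<and> w \<in> ext p \<and> R d (f u ! d) (f w ! d)}"
  proof -
    have X: "(cw_lab U u, cw_lab U w) \<in> set qs \<longleftrightarrow> R d (f u ! d) (f w ! d)" if "u \<in> ext p" "w \<in> ext p" for u w
      using Ulab[OF that(1)] Ulab[OF that(2)] qsiff[OF F1[OF that(1)] F1[OF that(2)]] by simp
    show ?thesis unfolding af_arcs U(2,3)
    proof (rule set_eqI)
      fix z show "z \<in> \<Union>(cw_arcs ` I) \<union> {(u, w). u \<in> ext p \<and> w \<in> ext p \<and> (cw_lab U u, cw_lab U w) \<in> set qs}
         \<longleftrightarrow> z \<in> \<Union>(cw_arcs ` I) \<union> {(u,w). u \<in> ext p \<and> w \<in> ext p \<and> R d (f u ! d) (f w ! d)}"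
        by (cases z) (use X in auto)
    qed
  qed
  have tk: "take d (f x) = p" if "x \<in> ext p" for x using that unfolding ext_def d_def by auto
  have dlen: "d < length (f x)" if "x \<in> ext p" for x using that unfolding ext_def d_def by auto
  have arcsEq: "\<Union>(cw_arcs ` I) \<union> {(u,w). u \<in> ext p \<and> w \<in> ext p \<and> R d (f u ! d) (f w ! d)}
      = {(x,y). x \<in> ext p \<and> y \<in> ext p \<and> lt x y}"
  proof (intro equalityI subsetI)
    fix z assume "z \<in> \<Union>(cw_arcs ` I) \<union> {(u,w). u \<in> ext p \<and> w \<in> ext p \<and> R d (f u ! d) (f w ! d)}"
    then show "z \<in> {(x,y). x \<in> ext p \<and> y \<in> ext p \<and> lt x y}"
    proof
      assume "z \<in> \<Union>(cw_arcs ` I)"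
      then show ?thesis unfolding Iarcs using SaP by auto
    next
      assume "z \<in> {(u,w). u \<in> ext p \<and> w \<in> ext p \<and> R d (f u ! d) (f w ! d)}"
      then obtain u w where z: "z = (u,w)" "u \<in> ext p" "w \<in> ext p" "R d (f u ! d) (f w ! d)" by auto
      have "f u ! d \<noteq> f w ! d" using irr F1 z by metis
      then have "next_less R (f u) (f w)" using nl_diff[of d "f u" "f w" R] tk dlen z by auto
      then have "lt u w" using rel z ext_sub by auto
      then show ?thesis using z by auto
    qed
  next
    fix z assume "z \<in> {(x,y). x \<in> ext p \<and> y \<in> ext p \<and> lt x y}"
    then obtain x y where z: "z = (x,y)" "x \<in> ext p" "y \<in> ext p" "lt x y" by auto
    have nl: "next_less R (f x) (f y)" using rel z ext_sub by auto
    show "z \<in> \<Union>(cw_arcs ` I) \<union> {(u,w). u \<in> ext p \<and> w \<in> ext p \<and> R d (f u ! d) (f w ! d)}"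
    proof (cases "f x ! d = f y ! d")
      case False
      then have "R d (f x ! d) (f y ! d)" using nl nl_diff[of d "f x" "f y" R] tk dlen z by auto
      then show ?thesis using z by auto
    next
      case True
      define a where "a = f x ! d"
      have "x \<in> Sa a \<and> y \<in> Sa a \<and> a \<in> A1"
      proof -
        have "x \<notin> N"
        proof
          assume xN: "x \<in> N"
          show False
          using F2[OF z(3)]
          proof
            assume yN: "y \<in> N"
            then have "f x = f y" using F4 xN True by metis
            then have "x = y" using injf z ext_sub unfolding inj_on_def by blast
            then show False using nl nl_irrefl by metis
          next
            assume "f y ! d \<in> A1 \<and> y \<in> Sa (f y ! d)"
            then have "take (Suc d) (f y) = p @ [f x ! d]" using True unfolding Sa_def ext_def d_def by auto
            then have "take (length (f x)) (f y) = f x" using F4[OF xN] by (metis length_append_singleton d_def)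
            then show False using nl nl_prefix by metis
          qed
        qed
        moreover have "y \<notin> N"
        proof
          assume yN: "y \<in> N"
          have "f x ! d \<in> A1 \<and> x \<in> Sa (f x ! d)" using F2[OF z(2)] \<open>x \<notin> N\<close> by auto
          then have "take (Suc d) (f x) = p @ [f y ! d]" using True unfolding Sa_def ext_def d_def by auto
          then have "take (length (f y)) (f x) = f y" using F4[OF yN] by (metis length_append_singleton d_def)
          then show False using nl nl_prefix2 by metis
        qed
        ultimately show ?thesis using F2 z True unfolding a_def by metis
      qed
      then show ?thesis unfolding Iarcs using z by auto
    qed
  qed
  have lenjs: "length js = k - 1"
  proof -
    have "distinct js" unfolding js_def by simp
    moreover have "set js = {..<k} - {t}" unfolding js_def by auto
    ultimately show ?thesis using distinct_card[of js] Suc.prems(2) by simp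
  qed
  have cQ: "2 * card Q \<le> k * (k - 1)"
  proof -
    have "2 * card Q \<le> card (D d) * (card (D d) - 1)"
      unfolding Q_def using asym_card[OF finD] soD unfolding strict_order_on_def by blast
    also have "\<dots> \<le> k * (k - 1)" using cD by (intro mult_le_mono) auto
    finally show ?thesis .
  qed
  have kk: "2 \<le> k * (k - 1)"
  proof -
    have "2 * 1 \<le> k * (k - 1)" using k2 by (intro mult_le_mono) auto
    then show ?thesis by simp
  qed
  have lenqs: "length qs = card Q" unfolding qs_def using ps distinct_card by fastforce
  have "good p (Suc h) t e"
    unfolding good_def
  proof (intro conjI)
    show "cw_wf e" unfolding e_def using U(1) qsne by (simp add: af_wf)
    show "cw_verts e = ext p" unfolding e_def using U(2) by simp
    show "cw_arcs e = {(x,y). x \<in> ext p \<and> y \<in> ext p \<and> lt x y}"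
      unfolding e_def using arcs2 arcsEq by simp
    show "\<forall>v\<in>ext p. cw_lab e v = t"
    proof
      fix v assume v: "v \<in> ext p"
      have "lab (f v ! d) < k" using lab(1) F1[OF v] by auto
      then show "cw_lab e v = t" unfolding e_def rf_lab[OF tjs] using Ulab[OF v] unfolding js_def by auto
    qed
    show "cw_labels e \<subseteq> {..<k}"
    proof -
      have "cw_labels e \<subseteq> cw_labels (addarcs qs U) \<union> set js \<union> {t}" unfolding e_def by (rule rf_labels)
      moreover have "cw_labels (addarcs qs U) \<subseteq> {..<k}"
        unfolding af_labels U(4) using Ilabels lab(1) ps(1) unfolding qs_def Q_def by auto
      ultimately show ?thesis using Suc.prems(2) unfolding js_def by auto
    qed
    show "cw_depth e \<le> Suc h * PP + clog (card (ext p))"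
      unfolding e_def rf_depth af_depth lenjs lenqs M_def[symmetric]
      using U(6) cQ kk unfolding PP_def by simp
  qed
  then show ?case by blast
qed

end




lemma nl_nil1: "\<not> next_less R [] Y" unfolding next_less_def by simp
lemma nl_nil2: "\<not> next_less R X []" unfolding next_less_def by simp

theorem lemma7p4:
  fixes V :: "'a set" and lt :: "'a \<Rightarrow> 'a \<Rightarrow> bool" and n k l :: nat
  assumes "finite V" and "V \<noteq> {}" and "card V = n"
    and "strict_order_on V lt"
    and "k \<ge> 2"
    and "has_qrep V lt TYPE('b) k l"
  shows "\<exists>e :: 'a cwexp. cw_wf e \<and> cw_verts e = V \<and>
           cw_arcs e = {(x, y). x \<in> V \<and> y \<in> V \<and> lt x y} \<and>
           card (cw_labels e) \<le> k \<and>
           int (cw_depth e) \<le> int l * (int k * (int k - 1) + \<lceil>log 2 (real k - 1)\<rceil>)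
              + \<lceil>log 2 (real n)\<rceil> + (int l - 1) * (int k - 1)"
proof -
  obtain i and D :: "nat \<Rightarrow> 'b set" and R f where
    q: "i < l" "\<forall>j<l. strict_order_on (D j) (R j)" "finite_width l D k"
       "inj_on f V" "f ` V \<subseteq> next_dom i l D" "\<forall>x\<in>V. \<forall>y\<in>V. next_less R (f x) (f y) \<longleftrightarrow> lt x y"
    using assms(6) unfolding has_qrep_def by (elim exE conjE) (rule that, assumption+)
  interpret qr V lt k l D R f
  proof
    show "finite V" by (rule assms(1))
    show "\<forall>j<l. strict_order_on (D j) (R j)" by (rule q(2))
    show "\<forall>j<l. finite (D j) \<and> card (D j) \<le> k" using q(3) unfolding finite_width_def by blast
    show "inj_on f V" by (rule q(4))
    show "\<forall>x\<in>V. is_word D (f x) \<and> length (f x) < l" using q(5) unfolding next_dom_def by blast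
    show "\<forall>x\<in>V. \<forall>y\<in>V. next_less R (f x) (f y) \<longleftrightarrow> lt x y" by (rule q(6))
    show "2 \<le> k" by (rule assms(5))
  qed
  have n1: "1 \<le> n" using assms(1,2) card_gt_0_iff[of V] unfolding assms(3)[symmetric] by linarith
  define B where "B = (l - 1) * PP + clog n + 1"
  have ltirr: "\<not> lt x x" if "x \<in> V" for x using q(6) that nl_irrefl by metis
  have ext0: "ext [] = {x\<in>V. f x \<noteq> []}" unfolding ext_def by auto
  have main: "\<exists>e :: 'a cwexp. cw_wf e \<and> cw_verts e = V \<and>
           cw_arcs e = {(x, y). x \<in> V \<and> y \<in> V \<and> lt x y} \<and>
           cw_labels e \<subseteq> {..<k} \<and> cw_depth e \<le> B"
  proof (cases "ext [] = {}")
    case True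
    obtain x0 where x0: "x0 \<in> V" using assms(2) by blast
    have fnil: "f x = []" if "x \<in> V" for x using True that unfolding ext0 by auto
    have "x = x0" if "x \<in> V" for x using inj_onD[OF q(4), of x x0] fnil[OF that] fnil[OF x0] that x0 by simp
    then have V1: "V = {x0}" using x0 by blast
    have la: "\<not> lt x0 x0" using ltirr x0 by blast
    show ?thesis
    proof (intro exI[of _ "CVertex x0 0"] conjI)
      show "cw_wf (CVertex x0 0)" by simp
      show "cw_verts (CVertex x0 0) = V" using V1 by simp
      show "cw_arcs (CVertex x0 0) = {(x,y). x \<in> V \<and> y \<in> V \<and> lt x y}" using V1 la by auto
      show "cw_labels (CVertex x0 (0::nat)) \<subseteq> {..<k}" using assms(5) by simp
      show "cw_depth (CVertex x0 (0::nat)) \<le> B" by simp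
    qed
  next
    case False
    obtain e0 where e0: "good [] (l - 1) 0 e0" using level[of "[]" "l - 1" 0] False assms(5) by auto
    have cS: "card (ext []) \<le> n" using card_mono[OF assms(1) ext_sub] assms(3) by simp
    have cS1: "1 \<le> card (ext [])" using False ext_fin[of "[]"] by (simp add: Suc_le_eq card_gt_0_iff)
    have dep0: "cw_depth e0 \<le> (l - 1) * PP + clog n"
      using e0 clog_mono[OF cS1 cS] unfolding good_def by simp
    show ?thesis
    proof (cases "\<exists>x0\<in>V. f x0 = []")
      case False2: False
      then have "ext [] = V" unfolding ext0 by auto
      then show ?thesis using e0 dep0 unfolding good_def B_def by (intro exI[of _ e0]) auto
    next
      case True
      then obtain x0 where x0: "x0 \<in> V" "f x0 = []" by blast
      have x0n: "x0 \<notin> ext []" using x0 unfolding ext0 by auto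
      have Veq: "V = insert x0 (ext [])"
      proof -
        have "x = x0" if "x \<in> V" "f x = []" for x using q(4) that x0 unfolding inj_on_def by metis
        then show ?thesis using x0 unfolding ext0 by blast
      qed
      have nx1: "\<not> lt x0 y" if "y \<in> V" for y
      proof
        assume "lt x0 y" then have "next_less R (f x0) (f y)" using q(6) that x0(1) by simp
        then show False using x0(2) nl_nil1[of R "f y"] by simp
      qed
      have nx2: "\<not> lt y x0" if "y \<in> V" for y
      proof
        assume "lt y x0" then have "next_less R (f y) (f x0)" using q(6) that x0(1) by simp
        then show False using x0(2) nl_nil2[of R "f y"] by simp
      qed
      define e where "e = CUnion e0 (CVertex x0 0)"
      have arcs: "cw_arcs e = {(x, y). x \<in> V \<and> y \<in> V \<and> lt x y}"
      proof -
        have "cw_arcs e = {(x, y). x \<in> ext [] \<and> y \<in> ext [] \<and> lt x y}" unfolding e_def using e0 unfolding good_def by simp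
        also have "\<dots> = {(x, y). x \<in> V \<and> y \<in> V \<and> lt x y}"
        proof (rule set_eqI)
          fix z show "z \<in> {(x, y). x \<in> ext [] \<and> y \<in> ext [] \<and> lt x y} \<longleftrightarrow> z \<in> {(x, y). x \<in> V \<and> y \<in> V \<and> lt x y}"
          proof (cases z)
            case (Pair x y)
            have "x \<in> V \<and> y \<in> V \<and> lt x y \<longleftrightarrow> x \<in> ext [] \<and> y \<in> ext [] \<and> lt x y"
            proof
              assume h: "x \<in> V \<and> y \<in> V \<and> lt x y"
              then have "x \<noteq> x0" "y \<noteq> x0" using nx1 nx2 by blast+
              then show "x \<in> ext [] \<and> y \<in> ext [] \<and> lt x y" using h Veq by blast
            next
              assume "x \<in> ext [] \<and> y \<in> ext [] \<and> lt x y"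
              then show "x \<in> V \<and> y \<in> V \<and> lt x y" using ext_sub by blast
            qed
            then show ?thesis using Pair by simp
          qed
        qed
        finally show ?thesis .
      qed
      show ?thesis
      proof (intro exI[of _ e] conjI arcs)
        show "cw_wf e" unfolding e_def using e0 x0n unfolding good_def by simp
        show "cw_verts e = V" unfolding e_def using e0 Veq unfolding good_def by auto
        show "cw_labels e \<subseteq> {..<k}" unfolding e_def using e0 assms(5) unfolding good_def by auto
        show "cw_depth e \<le> B" unfolding e_def B_def using dep0 by simp
      qed
    qed
  qed
  then obtain e :: "'a cwexp" where e: "cw_wf e" "cw_verts e = V"
     "cw_arcs e = {(x, y). x \<in> V \<and> y \<in> V \<and> lt x y}" "cw_labels e \<subseteq> {..<k}" "cw_depth e \<le> B"
    by blast
  have card: "card (cw_labels e) \<le> k" using card_mono[OF _ e(4)] by simp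
  have k1: "1 \<le> real k - 1" using assms(5) by simp
  have lg: "0 \<le> log 2 (real k - 1)" using k1 by simp
  have lg2: "- 1 < log 2 (real k - 1)" using lg by linarith
  have c1: "0 \<le> \<lceil>log 2 (real k - 1)\<rceil>" using lg2 by simp
  have ln0: "0 \<le> log 2 (real n)" using n1 by simp
  have ln1: "0 \<le> \<lceil>log 2 (real n)\<rceil>" using ln0 by linarith
  have cn: "\<lceil>log 2 (real n)\<rceil> = int (clog n)" unfolding clog_def using ln1 by simp
  have l1: "1 \<le> l" using q(1) by simp
  have kk: "2 \<le> int k * (int k - 1)"
  proof -
    have "2 * 1 \<le> int k * (int k - 1)" using assms(5) by (intro mult_mono) auto
    then show ?thesis by simp
  qed
  have lc: "0 \<le> int l * \<lceil>log 2 (real k - 1)\<rceil>" using c1 by simp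
  have "int (cw_depth e) \<le> int B" using e(5) by simp
  also have "int B = (int l - 1) * (int k * (int k - 1) + (int k - 1)) + int (clog n) + 1"
    unfolding B_def PP_def using l1 assms(5) by (simp add: of_nat_diff)
  also have "\<dots> \<le> int l * (int k * (int k - 1) + \<lceil>log 2 (real k - 1)\<rceil>)
              + \<lceil>log 2 (real n)\<rceil> + (int l - 1) * (int k - 1)"
    unfolding cn using kk lc by (simp add: algebra_simps)
  finally show ?thesis using e card by blast
qed


end
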